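(* Let $\mathcal{S}\subseteq\mathbb{R}^n$ and consider a system $\dot x=f(x)$, $y=h(x)$ with $h$ continuous, such that $\mathcal{S}$ is forward invariant, every solution starting in $\mathcal{S}$ is defined for all $t\ge0$, and every such solution converges as $t\to\infty$ to an equilibrium (a point $\bar x\in\mathcal{S}$ with $f(\bar x)=0$). Let $E$ denote the set of equilibria in $\mathcal{S}$. Then the system is detectable on $\mathcal{S}$ if and only if: for all $\bar x,\bar z\in E$, $h(\bar x)=h(\bar z)$ implies $\bar x=\bar z$.
   Context: The system is called detectable (on $\mathcal{S}$) if for every two trajectories $x(\cdot)$ and $z(\cdot)$ in $\mathcal{S}$ defined for all $t\ge 0$, $h(x(t))\equiv h(z(t))$ implies $|x(t)-z(t)|\to0$ as $t\to\infty$. Here $|\cdot|$ is the Euclidean norm. *)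

theory Defs
  imports "HOL-Analysis.Analysis"
begin

definition is_solution :: "(real^'n \<Rightarrow> real^'n) \<Rightarrow> (real \<Rightarrow> real^'n) \<Rightarrow> bool" where
  "is_solution f x \<longleftrightarrow>
     (\<forall>t\<ge>0. (x has_vector_derivative f (x t)) (at t within {0..}))"

definition trajectory_in :: "(real^'n \<Rightarrow> real^'n) \<Rightarrow> (real^'n) set \<Rightarrow> (real \<Rightarrow> real^'n) \<Rightarrow> bool" where
  "trajectory_in f S x \<longleftrightarrow> is_solution f x \<and> (\<forall>t\<ge>0. x t \<in> S)"

definition detectable_on ::
  "(real^'n \<Rightarrow> real^'n) \<Rightarrow> (real^'n \<Rightarrow> 'b) \<Rightarrow> (real^'n) set \<Rightarrow> bool" where
  "detectable_on f h S \<longleftrightarrow>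
     (\<forall>x z. trajectory_in f S x \<and> trajectory_in f S z \<and> (\<forall>t\<ge>0. h (x t) = h (z t))
        \<longrightarrow> ((\<lambda>t. norm (x t - z t)) \<longlongrightarrow> 0) at_top)"

definition equilibria :: "(real^'n \<Rightarrow> real^'n) \<Rightarrow> (real^'n) set \<Rightarrow> (real^'n) set" where
  "equilibria f S = {xb \<in> S. f xb = 0}"

end

theory Submission
  imports Defs
begin

theorem lemma1p4:
  fixes f :: "real^'n \<Rightarrow> real^'n" and h :: "real^'n \<Rightarrow> real^'m"
    and S :: "(real^'n) set"
  assumes h_cont: "continuous_on UNIV h"
    and fwd_inv: "\<And>x. is_solution f x \<Longrightarrow> x 0 \<in> S \<Longrightarrow> \<forall>t\<ge>0. x t \<in> S"
    and exists: "\<And>x0. x0 \<in> S \<Longrightarrow> \<exists>x. is_solution f x \<and> x 0 = x0"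
    and converge: "\<And>x. is_solution f x \<Longrightarrow> x 0 \<in> S \<Longrightarrow>
                      \<exists>xb \<in> equilibria f S. (x \<longlongrightarrow> xb) at_top"
  shows "detectable_on f h S \<longleftrightarrow>
         (\<forall>xb \<in> equilibria f S. \<forall>zb \<in> equilibria f S. h xb = h zb \<longrightarrow> xb = zb)"
proof
  assume D: "detectable_on f h S"
  show "\<forall>xb \<in> equilibria f S. \<forall>zb \<in> equilibria f S. h xb = h zb \<longrightarrow> xb = zb"
  proof (intro ballI impI)
    fix xb zb assume xb: "xb \<in> equilibria f S" and zb: "zb \<in> equilibria f S" and hh: "h xb = h zb"
    have tr: "trajectory_in f S (\<lambda>t. c)" if "c \<in> equilibria f S" for c
      using that unfolding trajectory_in_def is_solution_def equilibria_def
      by (auto intro: has_vector_derivative_const)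
    have "((\<lambda>t::real. norm (xb - zb)) \<longlongrightarrow> 0) at_top"
      using D tr[OF xb] tr[OF zb] hh unfolding detectable_on_def by auto
    then have "norm (xb - zb) = 0"
      using tendsto_const_iff[where F="at_top::real filter"] trivial_limit_at_top_linorder by metis
    then show "xb = zb" by simp
  qed
next
  assume U: "\<forall>xb \<in> equilibria f S. \<forall>zb \<in> equilibria f S. h xb = h zb \<longrightarrow> xb = zb"
  show "detectable_on f h S"
    unfolding detectable_on_def
  proof (intro allI impI, elim conjE)
    fix x z assume tx: "trajectory_in f S x" and tz: "trajectory_in f S z"
      and hh: "\<forall>t\<ge>0. h (x t) = h (z t)"
    obtain xb where xb: "xb \<in> equilibria f S" and lx: "(x \<longlongrightarrow> xb) at_top"
      using converge[of x] tx unfolding trajectory_in_def by auto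
    obtain zb where zb: "zb \<in> equilibria f S" and lz: "(z \<longlongrightarrow> zb) at_top"
      using converge[of z] tz unfolding trajectory_in_def by auto
    have c1: "((\<lambda>t. h (x t)) \<longlongrightarrow> h xb) at_top"
      using continuous_on_tendsto_compose[OF h_cont lx] by auto
    have c2: "((\<lambda>t. h (z t)) \<longlongrightarrow> h zb) at_top"
      using continuous_on_tendsto_compose[OF h_cont lz] by auto
    have ev: "eventually (\<lambda>t. h (z t) = h (x t)) (at_top::real filter)"
      using eventually_ge_at_top[of "0::real"] by (rule eventually_mono) (simp add: hh)
    have c3: "((\<lambda>t. h (x t)) \<longlongrightarrow> h zb) at_top"
      using tendsto_cong[OF ev] c2 by simp
    have "h xb = h zb" using tendsto_unique[OF _ c1 c3] by simp
    then have "xb = zb" using U xb zb by auto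
    then have "((\<lambda>t. x t - z t) \<longlongrightarrow> 0) at_top"
      using tendsto_diff[OF lx lz] by simp
    then show "((\<lambda>t. norm (x t - z t)) \<longlongrightarrow> 0) at_top"
      using tendsto_norm_zero by blast
  qed
qed

end
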